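(* Let $\Omega\subsetneq\mathbb{C}$ be a simply connected domain. Then for every $s\in\mathbb{D}$ and every $w\in\Omega$, $$\mathscr{C}_{\Omega}^{\mathbb{D},s}(w)=\eta_\Omega(w)=\eta_\Omega^{\mathbb{D}}(w).$$
   Context: $\mathbb{D}=\{z\in\mathbb{C}:|z|<1\}$. For domains $\Omega\subset\mathbb{C}$, $Y\subsetneq\mathbb{C}$, and points $w\in\Omega$, $s\in Y$, let $\mathcal{H}^s_w(\Omega,Y)$ be the set of holomorphic maps $h:\Omega\to Y$ with $h(w)=s$ and $h(z)\neq s$ for all $z\in\Omega\setminus\{w\}$. For a domain $Y\subsetneq\mathbb{C}$ and $v\in Y$, the Hurwitz density is $\eta_Y(v)=2/r_Y(v)$, where $r_Y(v)=\max\{h'(0): h:\mathbb{D}\to Y \text{ holomorphic},\ h(0)=v,\ h(z)\neq v \text{ for } z\in\mathbb{D}\setminus\{0\},\ h'(0)>0\}$. The Carathéodory density of the Hurwitz metric is $\mathscr{C}_{\Omega}^{Y,s}(w)=\sup\{\eta_Y(h(w))|h'(w)| : h\in\mathcal{H}^s_w(\Omega,Y)\}$ (defined to be $0$ if the family is empty). The Kobayashi density of the Hurwitz metric of $\Omega$ relative to $Y$ is $\eta_\Omega^Y(w)=\inf \eta_Y(t)/|h'(t)|$, the infimum over all holomorphic $h:Y\to\Omega$ and $t\in Y$ with $h(t)=w$, $h(u)\neq w$ for all $u\in Y\setminus\{t\}$, and $h'(t)\neq0$. *)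

theory Defs
  imports "HOL-Complex_Analysis.Complex_Analysis"
begin

definition hurwitz_family :: "complex set \<Rightarrow> complex set \<Rightarrow> complex \<Rightarrow> complex \<Rightarrow> (complex \<Rightarrow> complex) set" where
  "hurwitz_family \<Omega> Y w s =
     {h. h holomorphic_on \<Omega> \<and> h ` \<Omega> \<subseteq> Y \<and> h w = s \<and> (\<forall>z\<in>\<Omega> - {w}. h z \<noteq> s)}"

definition hurwitz_radius :: "complex set \<Rightarrow> complex \<Rightarrow> real" where
  "hurwitz_radius Y v =
     Sup {r. r > 0 \<and> (\<exists>h\<in>hurwitz_family (ball 0 1) Y 0 v. deriv h 0 = complex_of_real r)}"

definition hurwitz_density :: "complex set \<Rightarrow> complex \<Rightarrow> real" where
  "hurwitz_density Y v = 2 / hurwitz_radius Y v"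

text \<open>Caratheodory density of the Hurwitz metric (0 if the family is empty; the supremum
  is taken in the extended reals so that an unbounded family gives infinity).\<close>
definition caratheodory_hurwitz :: "complex set \<Rightarrow> complex set \<Rightarrow> complex \<Rightarrow> complex \<Rightarrow> ereal" where
  "caratheodory_hurwitz \<Omega> Y s w =
     (if hurwitz_family \<Omega> Y w s = {} then 0
      else (SUP h\<in>hurwitz_family \<Omega> Y w s. ereal (hurwitz_density Y (h w) * cmod (deriv h w))))"

definition kobayashi_hurwitz :: "complex set \<Rightarrow> complex set \<Rightarrow> complex \<Rightarrow> real" where
  "kobayashi_hurwitz \<Omega> Y w =
     Inf {hurwitz_density Y t / cmod (deriv h t) | h t.
            h holomorphic_on Y \<and> h ` Y \<subseteq> \<Omega> \<and> t \<in> Y \<and> h t = w \<and>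
            (\<forall>u\<in>Y - {t}. h u \<noteq> w) \<and> deriv h t \<noteq> 0}"

end

theory Submission imports Defs begin

definition mob :: "complex \<Rightarrow> complex \<Rightarrow> complex" where
  "mob a z = (z + a) / (1 + cnj a * z)"

lemma mob_eq: "mob a = Moebius_function 0 (-a)"
  by (rule ext) (simp add: mob_def Moebius_function_def)

lemma mob_den: assumes "norm a < 1" "norm z < 1" shows "1 + cnj a * z \<noteq> 0"
proof
  assume "1 + cnj a * z = 0"
  then have "cnj a * z = -1" by (simp add: add_eq_0_iff)
  then have "norm a * norm z = 1" by (metis complex_mod_cnj norm_minus_cancel norm_mult norm_one)
  moreover have "norm a * norm z < 1"
    using assms by (metis mult_strict_mono' norm_ge_zero mult_1_left)
  ultimately show False by simp
qed

lemma mob_in: "norm a < 1 \<Longrightarrow> norm z < 1 \<Longrightarrow> norm (mob a z) < 1"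
  unfolding mob_eq by (rule Moebius_function_norm_lt_1) auto

lemma mob_inv: "norm a < 1 \<Longrightarrow> norm z < 1 \<Longrightarrow> mob (-a) (mob a z) = z"
  unfolding mob_eq by (rule Moebius_function_compose) auto

lemma mob_0: "mob a 0 = a" by (simp add: mob_def)

lemma mob_self: "mob (-a) a = 0" by (simp add: mob_def)

lemma mob_holo: "norm a < 1 \<Longrightarrow> mob a holomorphic_on ball 0 1"
  unfolding mob_eq by (rule Moebius_function_holomorphic) auto

lemma mob_deriv: assumes "norm a < 1" "norm z < 1"
  shows "(mob a has_field_derivative (1 - cnj a * a) / (1 + cnj a * z)^2) (at z)"
proof -
  have d: "1 + cnj a * z \<noteq> 0" using mob_den assms by blast
  have "((\<lambda>z. (z + a) / (1 + cnj a * z)) has_field_derivative (1 - cnj a * a) / (1 + cnj a * z)^2) (at z)"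
    apply (rule derivative_eq_intros refl | simp add: d)+
    apply (simp add: field_simps power2_eq_square d)
    done
  then show ?thesis unfolding mob_def[abs_def] by simp
qed

lemma cnj_mult_self: "cnj a * a = complex_of_real ((norm a)^2)"
  by (metis complex_norm_square mult.commute)

lemma mob_deriv0: "norm a < 1 \<Longrightarrow> deriv (mob a) 0 = complex_of_real (1 - (norm a)^2)"
  using mob_deriv[of a 0] by (simp add: DERIV_imp_deriv cnj_mult_self)

lemma mob_deriv_self: assumes "norm a < 1"
  shows "deriv (mob (-a)) a = complex_of_real (1 / (1 - (norm a)^2))"
proof -
  have "deriv (mob (-a)) a = (1 - cnj a * a) / (1 - cnj a * a)^2"
    using mob_deriv[of "-a" a] assms by (simp add: DERIV_imp_deriv)
  also have "... = 1 / (1 - cnj a * a)"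
    using assms by (simp add: power2_eq_square cnj_mult_self)
  finally show ?thesis by (simp add: cnj_mult_self)
qed

lemma chain_deriv:
  assumes "f holomorphic_on A" "open A" "x \<in> A" "g holomorphic_on B" "open B" "f x \<in> B"
  shows "deriv (g \<circ> f) x = deriv g (f x) * deriv f x"
  by (rule DERIV_imp_deriv, rule DERIV_chain, rule holomorphic_derivI[OF assms(4-6)],
      rule holomorphic_derivI[OF assms(1-3)])

lemma inv_deriv:
  assumes "open A" "open B" "f holomorphic_on A" "g holomorphic_on B"
    "\<forall>z\<in>A. f z \<in> B \<and> g (f z) = z" "x \<in> A"
  shows "deriv g (f x) * deriv f x = 1"
proof -
  have "((g \<circ> f) has_field_derivative deriv g (f x) * deriv f x) (at x)"
    using assms by (intro DERIV_chain holomorphic_derivI[of g B] holomorphic_derivI[of f A]) auto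
  moreover have "((g \<circ> f) has_field_derivative 1) (at x)"
    by (rule has_field_derivative_transform_within_open[OF DERIV_ident \<open>open A\<close> \<open>x \<in> A\<close>])
       (use assms in auto)
  ultimately show ?thesis by (rule DERIV_unique)
qed

lemma schwarz_pick:
  assumes hk: "k holomorphic_on ball 0 1" and kin: "k ` ball 0 1 \<subseteq> ball 0 1" and a: "norm a < 1"
  shows "norm (deriv k a) * (1 - (norm a)^2) \<le> 1 - (norm (k a))^2"
proof -
  define b where "b = k a"
  have b: "norm b < 1" using kin a unfolding b_def by (auto simp: subset_iff)
  define F where "F = mob (-b) \<circ> (k \<circ> mob a)"
  have h1: "(k \<circ> mob a) holomorphic_on ball 0 1"
    using a kin by (intro holomorphic_on_compose_gen[OF mob_holo hk]) (auto simp: mob_in)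
  have hF: "F holomorphic_on ball 0 1"
    unfolding F_def using b kin a
    by (intro holomorphic_on_compose_gen[OF h1 mob_holo]) (auto simp: mob_in)
  have F0: "F 0 = 0" by (simp add: F_def mob_0 b_def mob_self)
  have Fin: "norm (F z) < 1" if "norm z < 1" for z
  proof -
    have "norm (mob a z) < 1" using that a by (simp add: mob_in)
    then have "norm (k (mob a z)) < 1" using kin by (auto simp: subset_iff)
    then show ?thesis unfolding F_def using b by (simp add: mob_in)
  qed
  have "norm (deriv F 0) \<le> 1"
    using Schwarz_Lemma(2)[OF hF F0 Fin, of 0] by simp
  moreover have "deriv F 0 = deriv (mob (-b)) b * (deriv k a * deriv (mob a) 0)"
  proof -
    have "deriv F 0 = deriv (mob (-b)) ((k \<circ> mob a) 0) * deriv (k \<circ> mob a) 0"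
      unfolding F_def using b a kin
      by (intro chain_deriv[OF h1 _ _ mob_holo]) (auto simp: mob_0 b_def[symmetric])
    moreover have "deriv (k \<circ> mob a) 0 = deriv k (mob a 0) * deriv (mob a) 0"
      using a kin by (intro chain_deriv[OF mob_holo _ _ hk]) (auto simp: mob_0)
    ultimately show ?thesis by (simp add: mob_0 b_def)
  qed
  moreover have pa: "0 < 1 - (norm a)^2" using a by (simp add: power_less_one_iff)
  moreover have pb: "0 < 1 - (norm b)^2" using b by (simp add: power_less_one_iff)
  ultimately have "norm (deriv k a) * (1 - (norm a)^2) / (1 - (norm b)^2) \<le> 1"
    using a b by (simp add: mob_deriv_self mob_deriv0 norm_mult norm_divide del: of_real_diff of_real_power)
  then show ?thesis using pb by (simp add: b_def divide_le_eq)
qed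

lemma riemann_norm:
  assumes "open \<Omega>" "simply_connected \<Omega>" "\<Omega> \<noteq> UNIV" "w \<in> \<Omega>"
  obtains f g \<rho> where "f holomorphic_on ball 0 1" "g holomorphic_on \<Omega>"
    "\<forall>z\<in>ball 0 1. f z \<in> \<Omega> \<and> g (f z) = z" "\<forall>z\<in>\<Omega>. g z \<in> ball 0 1 \<and> f (g z) = z"
    "f 0 = w" "\<rho> > 0" "deriv f 0 = complex_of_real \<rho>"
proof -
  have "\<Omega> \<noteq> {}" using assms by auto
  then obtain f0 g0 where hf0: "f0 holomorphic_on \<Omega>" and hg0: "g0 holomorphic_on ball 0 1"
    and fg0: "\<forall>z \<in> \<Omega>. f0 z \<in> ball 0 1 \<and> g0 (f0 z) = z"
    and gf0: "\<forall>z \<in> ball 0 1. g0 z \<in> \<Omega> \<and> f0 (g0 z) = z"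
    using Riemann_mapping_theorem[of \<Omega>] assms by blast
  define a where "a = f0 w"
  have a: "norm a < 1" using fg0 assms(4) a_def by auto
  define g1 where "g1 = g0 \<circ> mob a"
  define f1 where "f1 = mob (-a) \<circ> f0"
  have hg1: "g1 holomorphic_on ball 0 1" unfolding g1_def
    using a by (intro holomorphic_on_compose_gen[OF mob_holo hg0]) (auto simp: mob_in)
  have hf1: "f1 holomorphic_on \<Omega>" unfolding f1_def
    using a fg0 by (intro holomorphic_on_compose_gen[OF hf0 mob_holo]) auto
  have i1: "\<forall>z\<in>ball 0 1. g1 z \<in> \<Omega> \<and> f1 (g1 z) = z"
    using a gf0 by (auto simp: g1_def f1_def mob_in mob_inv)
  have i2: "\<forall>z\<in>\<Omega>. f1 z \<in> ball 0 1 \<and> g1 (f1 z) = z"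
    using a fg0 mob_inv[of "-a"] by (auto simp: g1_def f1_def mob_in)
  have g10: "g1 0 = w" using fg0 assms(4) by (simp add: g1_def mob_0 a_def)
  define c where "c = deriv g1 0"
  have "deriv f1 (g1 0) * c = 1" unfolding c_def
    by (rule inv_deriv[OF _ assms(1) hg1 hf1 i1]) auto
  then have c: "c \<noteq> 0" by auto
  define u where "u = c / complex_of_real (norm c)"
  have nu: "norm u = 1" using c by (simp add: u_def norm_divide)
  have uu: "cnj u * u = 1" using nu by (metis complex_norm_square mult.commute of_real_1 power_one)
  define f where "f = g1 \<circ> (\<lambda>z. cnj u * z)"
  define g where "g = (\<lambda>z. u * f1 z)"
  have rin: "(\<lambda>z. cnj u * z) ` ball 0 1 \<subseteq> ball 0 1" using nu by (auto simp: norm_mult)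
  have hf: "f holomorphic_on ball 0 1" unfolding f_def
    by (intro holomorphic_on_compose_gen[OF _ hg1 rin] holomorphic_intros)
  show ?thesis
  proof
    show "f holomorphic_on ball 0 1" by (fact hf)
    show "g holomorphic_on \<Omega>" unfolding g_def by (intro holomorphic_intros hf1)
    show "\<forall>z\<in>ball 0 1. f z \<in> \<Omega> \<and> g (f z) = z"
    proof
      fix z :: complex assume z: "z \<in> ball 0 1"
      then have "cnj u * z \<in> ball 0 1" using nu by (simp add: norm_mult)
      then show "f z \<in> \<Omega> \<and> g (f z) = z" using i1 uu
        by (auto simp: f_def g_def mult.assoc[symmetric] mult.commute[of u])
    qed
    show "\<forall>z\<in>\<Omega>. g z \<in> ball 0 1 \<and> f (g z) = z"
      using i2 uu nu by (auto simp: f_def g_def norm_mult mult.assoc[symmetric])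
    show "f 0 = w" using g10 by (simp add: f_def)
    show "norm c > 0" using c by simp
    have "deriv f 0 = deriv g1 ((\<lambda>z. cnj u * z) 0) * deriv (\<lambda>z. cnj u * z) 0" unfolding f_def
      using rin by (intro chain_deriv[of "\<lambda>z. cnj u * z" "ball 0 1" 0 g1 "ball 0 1", OF _ _ _ hg1]) (auto intro: holomorphic_intros)
    then have "deriv f 0 = deriv g1 0 * deriv (\<lambda>z. cnj u * z) 0" by simp
    also have "deriv (\<lambda>z. cnj u * z) 0 = cnj u"
      by (rule DERIV_imp_deriv) (auto intro!: derivative_eq_intros)
    also have "deriv g1 0 * cnj u = complex_of_real (norm c)"
    proof -
      have "c * cnj c = complex_of_real (norm c) * complex_of_real (norm c)"
        unfolding complex_norm_square[symmetric] by (simp add: power2_eq_square)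
      then show ?thesis using c by (simp add: u_def c_def[symmetric])
    qed
    finally show "deriv f 0 = complex_of_real (norm c)" .
  qed
qed

lemma radius_eq:
  assumes Y: "open Y" and hf: "f holomorphic_on ball 0 1" and hg: "g holomorphic_on Y"
    and fg: "\<forall>z\<in>ball 0 1. f z \<in> Y \<and> g (f z) = z" and gY: "\<forall>z\<in>Y. g z \<in> ball 0 1" and "\<rho> > 0"
    and df: "deriv f 0 = complex_of_real \<rho>"
  shows "hurwitz_radius Y (f 0) = \<rho>"
proof -
  have dg: "deriv g (f 0) * complex_of_real \<rho> = 1"
    using inv_deriv[OF _ Y hf hg fg, of 0] df by simp
  have g0: "g (f 0) = 0" using fg by simp
  show ?thesis unfolding hurwitz_radius_def
  proof (rule cSup_eq_maximum)
    have "f \<in> hurwitz_family (ball 0 1) Y 0 (f 0)"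
      unfolding hurwitz_family_def using hf fg by (auto) (metis g0 mem_ball_0)
    then show "\<rho> \<in> {r. r > 0 \<and> (\<exists>h\<in>hurwitz_family (ball 0 1) Y 0 (f 0). deriv h 0 = complex_of_real r)}"
      using df \<open>\<rho> > 0\<close> by blast
  next
    fix r assume "r \<in> {r. r > 0 \<and> (\<exists>h\<in>hurwitz_family (ball 0 1) Y 0 (f 0). deriv h 0 = complex_of_real r)}"
    then obtain h where r: "r > 0" and hh: "h holomorphic_on ball 0 1" and hin: "h ` ball 0 1 \<subseteq> Y"
      and h0: "h 0 = f 0" and dh: "deriv h 0 = complex_of_real r"
      unfolding hurwitz_family_def by auto
    define k where "k = g \<circ> h"
    have hk: "k holomorphic_on ball 0 1" unfolding k_def
      by (rule holomorphic_on_compose_gen[OF hh hg hin])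
    have k0: "k 0 = 0" by (simp add: k_def h0 g0)
    have kin: "norm (k z) < 1" if "norm z < 1" for z
    proof -
      have "h z \<in> Y" using hin that by auto
      then show ?thesis using gY by (simp add: k_def)
    qed
    have "norm (deriv k 0) \<le> 1" using Schwarz_Lemma(2)[OF hk k0 kin, of 0] by simp
    moreover have "deriv k 0 = deriv g (h 0) * deriv h 0" unfolding k_def
      using hin by (intro chain_deriv[OF hh _ _ hg Y]) auto
    ultimately have "norm (deriv g (f 0) * complex_of_real r) \<le> 1" by (simp add: h0 dh)
    moreover have "deriv g (f 0) = complex_of_real (1 / \<rho>)"
      using dg \<open>\<rho> > 0\<close> by (simp add: field_simps)
    ultimately have "r / \<rho> \<le> 1" using r \<open>\<rho> > 0\<close> by (simp add: norm_mult norm_divide)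
    then show "r \<le> \<rho>" using \<open>\<rho> > 0\<close> by (simp add: divide_le_eq)
  qed
qed

lemma radius_disc: "norm v < 1 \<Longrightarrow> hurwitz_radius (ball 0 1) v = 1 - (norm v)^2"
  using radius_eq[of "ball 0 1" "mob v" "mob (-v)" "1 - (norm v)^2"]
  by (simp add: mob_holo mob_in mob_inv mob_0 mob_deriv0 power_less_one_iff)

lemma density_disc: "norm v < 1 \<Longrightarrow> hurwitz_density (ball 0 1) v = 2 / (1 - (norm v)^2)"
  by (simp add: hurwitz_density_def radius_disc)

theorem proposition3p5:
  fixes \<Omega> :: "complex set" and s w :: complex
  assumes "open \<Omega>" and "connected \<Omega>" and "simply_connected \<Omega>" and "\<Omega> \<noteq> UNIV"
    and "s \<in> ball 0 1" and "w \<in> \<Omega>"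
  shows "caratheodory_hurwitz \<Omega> (ball 0 1) s w = ereal (hurwitz_density \<Omega> w)
       \<and> hurwitz_density \<Omega> w = kobayashi_hurwitz \<Omega> (ball 0 1) w"
proof -
  obtain f g \<rho> where hf: "f holomorphic_on ball 0 1" and hg: "g holomorphic_on \<Omega>"
    and fg: "\<forall>z\<in>ball 0 1. f z \<in> \<Omega> \<and> g (f z) = z" and gf: "\<forall>z\<in>\<Omega>. g z \<in> ball 0 1 \<and> f (g z) = z"
    and f0: "f 0 = w" and \<rho>: "\<rho> > 0" and df: "deriv f 0 = complex_of_real \<rho>"
    using riemann_norm[OF assms(1,3,4,6)] by blast
  have "hurwitz_radius \<Omega> w = \<rho>"
    using radius_eq[OF assms(1) hf hg fg _ \<rho> df] gf f0 by blast
  then have dO: "hurwitz_density \<Omega> w = 2 / \<rho>" by (simp add: hurwitz_density_def)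
  have dg0: "deriv g w * complex_of_real \<rho> = 1"
    using inv_deriv[OF _ assms(1) hf hg fg, of 0] df f0 by simp
  have dg: "deriv g w = complex_of_real (1 / \<rho>)"
    using dg0 \<rho> by (simp add: field_simps)
  have gw: "g w = 0" using fg f0 by auto
  have s: "norm s < 1" using assms(5) by simp
  have ps: "0 < 1 - (norm s)^2" using s by (simp add: power_less_one_iff)
  have part1: "caratheodory_hurwitz \<Omega> (ball 0 1) s w = ereal (2 / \<rho>)"
  proof -
    define F where "F = hurwitz_family \<Omega> (ball 0 1) w s"
    define h0 where "h0 = mob s \<circ> g"
    have gin: "g ` \<Omega> \<subseteq> ball 0 1" using gf by auto
    have hh0: "h0 holomorphic_on \<Omega>" unfolding h0_def
      by (rule holomorphic_on_compose_gen[OF hg mob_holo[OF s] gin])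
    have h0F: "h0 \<in> F"
      unfolding F_def hurwitz_family_def
    proof (intro CollectI conjI ballI hh0)
      show "h0 ` \<Omega> \<subseteq> ball 0 1" using gf s by (auto simp: h0_def mob_in)
      show "h0 w = s" by (simp add: h0_def gw mob_0)
      fix z assume z: "z \<in> \<Omega> - {w}"
      show "h0 z \<noteq> s"
      proof
        assume "h0 z = s"
        then have "mob (-s) (mob s (g z)) = mob (-s) s" by (simp add: h0_def)
        then have gz: "g z = 0" using gf z s by (simp add: mob_inv mob_self)
        have "f (g z) = z" using gf z by blast
        then have "z = f 0" using gz by simp
        then show False using z f0 by simp
      qed
    qed
    have val: "hurwitz_density (ball 0 1) (h0 w) * cmod (deriv h0 w) = 2 / \<rho>"
    proof -
      have "deriv h0 w = deriv (mob s) (g w) * deriv g w" unfolding h0_def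
        using gin assms(6) by (intro chain_deriv[OF hg assms(1) _ mob_holo[OF s]]) auto
      then have "deriv h0 w = complex_of_real ((1 - (norm s)^2) * (1 / \<rho>))"
        using s by (simp add: gw mob_deriv0 dg)
      then have "cmod (deriv h0 w) = abs ((1 - (norm s)^2) * (1 / \<rho>))" by (simp only: norm_of_real)
      then have "cmod (deriv h0 w) = (1 - (norm s)^2) / \<rho>" using ps \<rho> by simp
      moreover have "h0 w = s" by (simp add: h0_def gw mob_0)
      ultimately show ?thesis using ps \<rho> s by (simp add: density_disc field_simps)
    qed
    have ub: "hurwitz_density (ball 0 1) (h w) * cmod (deriv h w) \<le> 2 / \<rho>" if "h \<in> F" for h
    proof -
      from that have hh: "h holomorphic_on \<Omega>" and hin: "h ` \<Omega> \<subseteq> ball 0 1" and hw: "h w = s"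
        unfolding F_def hurwitz_family_def by auto
      have fin: "f ` ball 0 1 \<subseteq> \<Omega>" using fg by auto
      define k where "k = h \<circ> f"
      have hk: "k holomorphic_on ball 0 1" unfolding k_def
        by (rule holomorphic_on_compose_gen[OF hf hh fin])
      have kin: "k ` ball 0 1 \<subseteq> ball 0 1" using fin hin by (auto simp: k_def)
      have "norm (deriv k 0) * (1 - (norm (0::complex))^2) \<le> 1 - (norm (k 0))^2"
        by (rule schwarz_pick[OF hk kin]) simp
      moreover have "deriv k 0 = deriv h (f 0) * deriv f 0" unfolding k_def
        using fin by (intro chain_deriv[OF hf _ _ hh assms(1)]) auto
      ultimately have "norm (deriv h w) * \<rho> \<le> 1 - (norm s)^2"
        using \<rho> by (simp add: k_def f0 hw df norm_mult)
      then have "norm (deriv h w) \<le> (1 - (norm s)^2) / \<rho>" using \<rho> by (simp add: field_simps)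
      then have "2 / (1 - (norm s)^2) * norm (deriv h w) \<le> 2 / (1 - (norm s)^2) * ((1 - (norm s)^2) / \<rho>)"
        using ps by (intro mult_left_mono) auto
      moreover have "2 / (1 - (norm s)^2) * ((1 - (norm s)^2) / \<rho>) = 2 / \<rho>" using ps \<rho> by (simp add: field_simps)
      ultimately have "2 / (1 - (norm s)^2) * norm (deriv h w) \<le> 2 / \<rho>" by linarith
      then show ?thesis using s hw by (simp only: density_disc)
    qed
    have "F \<noteq> {}" using h0F by auto
    moreover have "(SUP h\<in>F. ereal (hurwitz_density (ball 0 1) (h w) * cmod (deriv h w))) = ereal (2 / \<rho>)"
    proof (rule order_antisym)
      show "(SUP h\<in>F. ereal (hurwitz_density (ball 0 1) (h w) * cmod (deriv h w))) \<le> ereal (2 / \<rho>)"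
        using ub by (intro SUP_least) auto
      show "ereal (2 / \<rho>) \<le> (SUP h\<in>F. ereal (hurwitz_density (ball 0 1) (h w) * cmod (deriv h w)))"
        using h0F val by (intro SUP_upper2[of h0]) auto
    qed
    ultimately show ?thesis unfolding caratheodory_hurwitz_def F_def by simp
  qed
  have part2: "kobayashi_hurwitz \<Omega> (ball 0 1) w = 2 / \<rho>"
    unfolding kobayashi_hurwitz_def
  proof (rule cInf_eq_minimum)
    have "f ` ball 0 1 \<subseteq> \<Omega>" using fg by auto
    moreover have "\<forall>u\<in>ball 0 1 - {0}. f u \<noteq> w"
      using fg f0 by (metis DiffE insertCI mem_ball_0 norm_zero zero_less_one)
    moreover have "hurwitz_density (ball 0 1) 0 / cmod (deriv f 0) = 2 / \<rho>"
      using \<rho> by (simp add: density_disc df)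
    ultimately show "2 / \<rho> \<in> {hurwitz_density (ball 0 1) t / cmod (deriv h t) | h t.
            h holomorphic_on ball 0 1 \<and> h ` ball 0 1 \<subseteq> \<Omega> \<and> t \<in> ball 0 1 \<and> h t = w \<and>
            (\<forall>u\<in>ball 0 1 - {t}. h u \<noteq> w) \<and> deriv h t \<noteq> 0}"
      using hf f0 df \<rho> by (intro CollectI exI[of _ f] exI[of _ 0]) auto
  next
    fix x assume "x \<in> {hurwitz_density (ball 0 1) t / cmod (deriv h t) | h t.
            h holomorphic_on ball 0 1 \<and> h ` ball 0 1 \<subseteq> \<Omega> \<and> t \<in> ball 0 1 \<and> h t = w \<and>
            (\<forall>u\<in>ball 0 1 - {t}. h u \<noteq> w) \<and> deriv h t \<noteq> 0}"
    then obtain h t where x: "x = hurwitz_density (ball 0 1) t / cmod (deriv h t)"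
      and hh: "h holomorphic_on ball 0 1" and hin: "h ` ball 0 1 \<subseteq> \<Omega>" and t: "t \<in> ball 0 1"
      and ht: "h t = w" and dh: "deriv h t \<noteq> 0" by blast
    have nt: "norm t < 1" using t by simp
    have pt: "0 < 1 - (norm t)^2" using nt by (simp add: power_less_one_iff)
    define k where "k = g \<circ> h"
    have hk: "k holomorphic_on ball 0 1" unfolding k_def
      by (rule holomorphic_on_compose_gen[OF hh hg hin])
    have kin: "k ` ball 0 1 \<subseteq> ball 0 1" using hin gf by (auto simp: k_def)
    have "norm (deriv k t) * (1 - (norm t)^2) \<le> 1 - (norm (k t))^2"
      by (rule schwarz_pick[OF hk kin nt])
    moreover have "deriv k t = deriv g (h t) * deriv h t" unfolding k_def
      using hin t by (intro chain_deriv[OF hh _ _ hg assms(1)]) auto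
    ultimately have "norm (deriv h t) / \<rho> * (1 - (norm t)^2) \<le> 1"
      using \<rho> by (simp add: k_def ht gw dg norm_mult norm_divide)
    then have "norm (deriv h t) * (1 - (norm t)^2) / \<rho> \<le> 1" by simp
    then have le: "(1 - (norm t)^2) * norm (deriv h t) \<le> \<rho>" using \<rho> by (simp add: divide_le_eq mult.commute)
    have "x = 2 / ((1 - (norm t)^2) * norm (deriv h t))" using nt by (simp add: x density_disc)
    moreover have "2 / \<rho> \<le> 2 / ((1 - (norm t)^2) * norm (deriv h t))"
      using le pt dh by (intro frac_le) auto
    ultimately show "2 / \<rho> \<le> x" by simp
  qed
  show ?thesis using part1 part2 dO by simp
qed

end
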